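(* Let $G$ be a symmetric connected graph of order $n\ge 3$ and let $g:A\to B$ be any function. Then $1\leq fix(G)+fix(F_G)\leq 3n-4$. Both bounds are sharp.
   Context: All graphs are simple, finite, nontrivial and connected. A set $S\subseteq V(H)$ is a fixing set of a graph $H$ if the only automorphism of $H$ fixing every vertex of $S$ is the identity; $fix(H)$ is the minimum cardinality of a fixing set of $H$. A connected graph $G$ is symmetric if $fix(G)\neq 0$ (i.e. $G$ has a nontrivial automorphism). Functigraph: let $G_1,G_2$ be disjoint copies of a connected graph $G$, with $A=V(G_1)$, $B=V(G_2)$, and let $g:A\to B$ be a function. The functigraph $F_G$ has vertex set $A\cup B$ and edge set $E(G_1)\cup E(G_2)\cup\{ug(u):u\in A\}$. *)

theory Defs
  imports Main
begin

definition sgraph :: "'a set \<Rightarrow> ('a \<Rightarrow> 'a \<Rightarrow> bool) \<Rightarrow> bool" where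
  "sgraph V E \<longleftrightarrow> finite V \<and> V \<noteq> {} \<and>
     (\<forall>u v. E u v \<longrightarrow> u \<in> V \<and> v \<in> V) \<and>
     (\<forall>u v. E u v \<longrightarrow> E v u) \<and> (\<forall>u. \<not> E u u)"

definition gconnected :: "'a set \<Rightarrow> ('a \<Rightarrow> 'a \<Rightarrow> bool) \<Rightarrow> bool" where
  "gconnected V E \<longleftrightarrow> (\<forall>u\<in>V. \<forall>v\<in>V. (u, v) \<in> {(x, y). E x y}\<^sup>*)"

definition automorphism :: "'a set \<Rightarrow> ('a \<Rightarrow> 'a \<Rightarrow> bool) \<Rightarrow> ('a \<Rightarrow> 'a) \<Rightarrow> bool" where
  "automorphism V E \<sigma> \<longleftrightarrow> bij_betw \<sigma> V V \<and>
     (\<forall>u\<in>V. \<forall>v\<in>V. E u v \<longleftrightarrow> E (\<sigma> u) (\<sigma> v))"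

definition fixing_set :: "'a set \<Rightarrow> ('a \<Rightarrow> 'a \<Rightarrow> bool) \<Rightarrow> 'a set \<Rightarrow> bool" where
  "fixing_set V E S \<longleftrightarrow> S \<subseteq> V \<and>
     (\<forall>\<sigma>. automorphism V E \<sigma> \<and> (\<forall>x\<in>S. \<sigma> x = x) \<longrightarrow> (\<forall>x\<in>V. \<sigma> x = x))"

definition fix_num :: "'a set \<Rightarrow> ('a \<Rightarrow> 'a \<Rightarrow> bool) \<Rightarrow> nat" where
  "fix_num V E = (LEAST k. \<exists>S. fixing_set V E S \<and> card S = k)"

definition symmetric_graph :: "'a set \<Rightarrow> ('a \<Rightarrow> 'a \<Rightarrow> bool) \<Rightarrow> bool" where
  "symmetric_graph V E \<longleftrightarrow> fix_num V E \<noteq> 0"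

text \<open>Functigraph: G1 = Inl-copy (A), G2 = Inr-copy (B); g maps A to B,
  represented as a function on the vertices of G with g ` V \<subseteq> V.\<close>
definition functi_V :: "'a set \<Rightarrow> ('a + 'a) set" where
  "functi_V V = Inl ` V \<union> Inr ` V"

fun functi_E :: "('a \<Rightarrow> 'a \<Rightarrow> bool) \<Rightarrow> ('a \<Rightarrow> 'a) \<Rightarrow> 'a + 'a \<Rightarrow> 'a + 'a \<Rightarrow> bool" where
  "functi_E E g (Inl u) (Inl v) = E u v"
| "functi_E E g (Inr u) (Inr v) = E u v"
| "functi_E E g (Inl u) (Inr v) = (v = g u)"
| "functi_E E g (Inr v) (Inl u) = (v = g u)"

end

theory Submission
  imports Defs
begin


lemma fix_le: "fixing_set V E S \<Longrightarrow> fix_num V E \<le> card S"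
  unfolding fix_num_def by (rule Least_le) blast

lemma fixing_set_V: "fixing_set V E V"
  unfolding fixing_set_def by blast

lemma fix_attained: "\<exists>S. fixing_set V E S \<and> card S = fix_num V E"
  unfolding fix_num_def by (rule LeastI_ex) (use fixing_set_V in blast)

lemma aut_in: "automorphism V E \<sigma> \<Longrightarrow> x \<in> V \<Longrightarrow> \<sigma> x \<in> V"
  unfolding automorphism_def by (meson bij_betwE)

lemma aut_inj: "automorphism V E \<sigma> \<Longrightarrow> x \<in> V \<Longrightarrow> y \<in> V \<Longrightarrow> \<sigma> x = \<sigma> y \<Longrightarrow> x = y"
  unfolding automorphism_def by (meson bij_betw_imp_inj_on inj_onD)

lemma aut_surj: "automorphism V E \<sigma> \<Longrightarrow> y \<in> V \<Longrightarrow> \<exists>x\<in>V. y = \<sigma> x"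
  unfolding automorphism_def by (metis bij_betw_imp_surj_on imageE)

lemma aut_E: "automorphism V E \<sigma> \<Longrightarrow> x \<in> V \<Longrightarrow> y \<in> V \<Longrightarrow> E (\<sigma> x) (\<sigma> y) = E x y"
  unfolding automorphism_def by blast

lemma complement_fixing:
  assumes "T \<subseteq> V" and "\<forall>x\<in>T. \<forall>y\<in>T. x \<noteq> y \<longrightarrow> (\<exists>z\<in>V - T. E x z \<noteq> E y z)"
  shows "fixing_set V E (V - T)"
  unfolding fixing_set_def
proof (intro conjI allI impI ballI)
  fix \<sigma> x assume h: "automorphism V E \<sigma> \<and> (\<forall>x\<in>V - T. \<sigma> x = x)" and x: "x \<in> V"
  show "\<sigma> x = x"
  proof (rule ccontr)
    assume ne: "\<sigma> x \<noteq> x"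
    have xT: "x \<in> T" using h x ne by blast
    have a: "automorphism V E \<sigma>" using h by blast
    have sx: "\<sigma> x \<in> V" using aut_in[OF a x] .
    show False
    proof (cases "\<sigma> x \<in> T")
      case True
      then obtain z where z: "z \<in> V - T" "E x z \<noteq> E (\<sigma> x) z" using assms(2) xT ne by metis
      have "E (\<sigma> x) (\<sigma> z) = E x z" using aut_E[OF a x] z by blast
      moreover have "\<sigma> z = z" using h z by blast
      ultimately show False using z by simp
    next
      case False
      then have "\<sigma> (\<sigma> x) = \<sigma> x" using h sx by blast
      then have "\<sigma> x = x" using aut_inj[OF a sx x] by blast
      then show False using ne by simp
    qed
  qed
qed (use assms in blast)

lemma fix_G_le:
  assumes "finite V" "x \<in> V"
  shows "fix_num V E \<le> card V - 1"
proof -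
  have "fixing_set V E (V - {x})" by (rule complement_fixing) (use assms in auto)
  then have "fix_num V E \<le> card (V - {x})" by (rule fix_le)
  then show ?thesis using assms by simp
qed

lemma fixed_unique:
  assumes "automorphism V E \<sigma>" "\<forall>v\<in>V. Q v \<longrightarrow> Q (\<sigma> v)" "w \<in> V" "Q w" "\<forall>v\<in>V. Q v \<longrightarrow> v = w"
  shows "\<sigma> w = w"
  using assms aut_in[OF assms(1) assms(3)] by blast

lemma fixed_nbr:
  assumes a: "automorphism V E \<sigma>" and "x \<in> V" "\<sigma> x = x" "w \<in> V" "E x w" "Q w"
    and "\<forall>v\<in>V. Q v \<longrightarrow> Q (\<sigma> v)"
    and "\<forall>v\<in>V. E x v \<longrightarrow> Q v \<longrightarrow> v \<noteq> w \<longrightarrow> \<sigma> v = v"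
  shows "\<sigma> w = w"
proof (rule ccontr)
  assume ne: "\<sigma> w \<noteq> w"
  have sw: "\<sigma> w \<in> V" using aut_in[OF a] assms by blast
  have "E x (\<sigma> w)" using aut_E[OF a, of x w] assms by simp
  moreover have "Q (\<sigma> w)" using assms by blast
  ultimately have "\<sigma> (\<sigma> w) = \<sigma> w" using assms sw ne by blast
  then have "\<sigma> w = w" using aut_inj[OF a] sw assms by blast
  then show False using ne by simp
qed

definition Q1 where "Q1 V E v \<longleftrightarrow> (\<exists>u\<in>V. \<forall>u'\<in>V. E v u' \<longleftrightarrow> u' = u)"
definition Q3 where "Q3 V E v \<longleftrightarrow> (\<exists>a\<in>V. \<exists>b\<in>V. \<exists>c\<in>V. a \<noteq> b \<and> a \<noteq> c \<and> b \<noteq> c \<and> E v a \<and> E v b \<and> E v c)"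

lemma Q1_pres:
  assumes a: "automorphism V E \<sigma>" shows "\<forall>v\<in>V. Q1 V E v \<longrightarrow> Q1 V E (\<sigma> v)"
proof (intro ballI impI)
  fix v assume v: "v \<in> V" and "Q1 V E v"
  then obtain u where u: "u \<in> V" "\<forall>u'\<in>V. E v u' \<longleftrightarrow> u' = u" unfolding Q1_def by blast
  have "\<forall>u'\<in>V. E (\<sigma> v) u' \<longleftrightarrow> u' = \<sigma> u"
  proof
    fix u' assume "u' \<in> V"
    then obtain u'' where u'': "u'' \<in> V" "u' = \<sigma> u''" using aut_surj[OF a] by blast
    show "E (\<sigma> v) u' \<longleftrightarrow> u' = \<sigma> u"
      using u'' u v aut_E[OF a, of v u''] aut_inj[OF a, of u'' u] by auto
  qed
  then show "Q1 V E (\<sigma> v)" unfolding Q1_def using aut_in[OF a u(1)] by blast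
qed

lemma Q3_pres:
  assumes a: "automorphism V E \<sigma>" shows "\<forall>v\<in>V. Q3 V E v \<longrightarrow> Q3 V E (\<sigma> v)"
proof (intro ballI impI)
  fix v assume v: "v \<in> V" and "Q3 V E v"
  then obtain x y z where h: "x\<in>V" "y\<in>V" "z\<in>V" "x \<noteq> y" "x \<noteq> z" "y \<noteq> z" "E v x" "E v y" "E v z"
    unfolding Q3_def by blast
  have "\<sigma> x \<in> V" "\<sigma> y \<in> V" "\<sigma> z \<in> V" using h aut_in[OF a] by auto
  moreover have "\<sigma> x \<noteq> \<sigma> y" using h aut_inj[OF a, of x y] by auto
  moreover have "\<sigma> x \<noteq> \<sigma> z" using h aut_inj[OF a, of x z] by auto
  moreover have "\<sigma> y \<noteq> \<sigma> z" using h aut_inj[OF a, of y z] by auto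
  moreover have "E (\<sigma> v) (\<sigma> x)" "E (\<sigma> v) (\<sigma> y)" "E (\<sigma> v) (\<sigma> z)"
      using h v aut_E[OF a] by auto
  ultimately show "Q3 V E (\<sigma> v)" unfolding Q3_def by blast
qed

definition sw :: "'a \<Rightarrow> 'a \<Rightarrow> 'a \<Rightarrow> 'a" where
  "sw a b x = (if x = a then b else if x = b then a else x)"

lemma sw_E:
  assumes ab: "E a b = E b a" and tu: "u \<noteq> a \<Longrightarrow> u \<noteq> b \<Longrightarrow> E u a = E u b"
   and tv: "v \<noteq> a \<Longrightarrow> v \<noteq> b \<Longrightarrow> E a v = E b v" and irr: "\<not> E a a" "\<not> E b b"
  shows "E u v = E (sw a b u) (sw a b v)"
proof (cases "u = a")
  case True
  then show ?thesis
    by (cases "v = a"; cases "v = b") (auto simp: sw_def ab irr dest: tv)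
next
  case ua: False
  show ?thesis
  proof (cases "u = b")
    case True
    then show ?thesis using ua
      by (cases "v = a"; cases "v = b") (auto simp: sw_def ab irr dest: tv)
  next
    case False
    then show ?thesis using ua tu
      by (cases "v = a"; cases "v = b") (auto simp: sw_def)
  qed
qed

lemma sw_aut:
  assumes "a \<in> V" "b \<in> V" "\<forall>u v. E u v \<longrightarrow> E v u" "\<forall>u. \<not> E u u"
    and "\<forall>z\<in>V. z \<noteq> a \<longrightarrow> z \<noteq> b \<longrightarrow> (E a z \<longleftrightarrow> E b z)"
  shows "automorphism V E (sw a b)"
  unfolding automorphism_def
proof
  show "bij_betw (sw a b) V V"
    by (rule bij_betw_byWitness[where f'="sw a b"]) (use assms in \<open>auto simp: sw_def\<close>)
  have sym: "E u v \<Longrightarrow> E v u" for u v using assms(3) by blast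
  show "\<forall>u\<in>V. \<forall>v\<in>V. E u v = E (sw a b u) (sw a b v)"
  proof (intro ballI)
    fix u v assume u: "u \<in> V" and v: "v \<in> V"
    have ab: "E a b = E b a" using sym by blast
    have tu: "u \<noteq> a \<Longrightarrow> u \<noteq> b \<Longrightarrow> E u a = E u b" using assms(5) u sym by blast
    have tv: "v \<noteq> a \<Longrightarrow> v \<noteq> b \<Longrightarrow> E a v = E b v" using assms(5) v by blast
    have irr: "\<not> E a a" "\<not> E b b" using assms(4) by auto
    show "E u v = E (sw a b u) (sw a b v)"
      by (rule sw_E[OF ab tu tv irr])
  qed
qed

lemma twin_card:
  assumes "finite X" "X \<subseteq> V" "\<forall>u v. E u v \<longrightarrow> E v u" "\<forall>u. \<not> E u u"
    and tw: "\<forall>a\<in>X. \<forall>b\<in>X. a \<noteq> b \<longrightarrow> (\<forall>z\<in>V. z \<noteq> a \<longrightarrow> z \<noteq> b \<longrightarrow> (E a z \<longleftrightarrow> E b z))"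
    and fs: "fixing_set V E S"
  shows "card X \<le> card (X \<inter> S) + 1"
proof -
  have fin: "finite (X - S)" using assms by simp
  have "card (X - S) \<le> Suc 0"
  proof (rule card_le_Suc0_iff_eq[OF fin, THEN iffD2])
    show "\<forall>x\<in>X - S. \<forall>y\<in>X - S. x = y"
    proof (intro ballI, rule ccontr)
      fix x y assume x: "x \<in> X - S" and y: "y \<in> X - S" and ne: "x \<noteq> y"
      have aut: "automorphism V E (sw x y)"
        by (rule sw_aut) (use assms x y ne in auto)
      have "\<forall>s\<in>S. sw x y s = s" using x y unfolding sw_def by auto
      moreover have "x \<in> V" using x assms by auto
      ultimately have "sw x y x = x" using fs aut unfolding fixing_set_def by blast
      then show False using ne unfolding sw_def by simp
    qed
  qed
  moreover have "card X = card (X \<inter> S) + card (X - S)"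
  proof -
    have "X = (X \<inter> S) \<union> (X - S)" by blast
    then have "card X = card ((X \<inter> S) \<union> (X - S))" by simp
    also have "\<dots> = card (X \<inter> S) + card (X - S)"
      by (rule card_Un_disjoint) (use assms(1) in auto)
    finally show ?thesis .
  qed
  ultimately show ?thesis by linarith
qed

lemma card_functi: "finite V \<Longrightarrow> card (functi_V V) = 2 * card V"
  unfolding functi_V_def
  by (subst card_Un_disjoint) (auto simp: card_image)

lemma finite_functi: "finite V \<Longrightarrow> finite (functi_V V)"
  unfolding functi_V_def by simp

lemma exists_nbr:
  assumes "gconnected V E" "c \<in> V" "v \<in> V" "v \<noteq> c"
  shows "\<exists>w. E c w"
proof -
  have "(c, v) \<in> {(x, y). E x y}\<^sup>*" using assms unfolding gconnected_def by blast
  then show ?thesis using assms(4) by (cases rule: converse_rtranclE) auto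
qed

lemma three_elem:
  assumes "finite V" "3 \<le> card V" "x \<in> V" "y \<in> V"
  shows "\<exists>z\<in>V. z \<noteq> x \<and> z \<noteq> y"
proof (rule ccontr)
  assume "\<not> ?thesis"
  then have "V \<subseteq> {x, y}" by blast
  then have "card V \<le> card {x, y}" by (rule card_mono[rotated]) simp
  also have "\<dots> \<le> 2" by (simp add: card_insert_if)
  finally show False using assms by simp
qed

lemma Inr_helper:
  assumes "T \<subseteq> Inr ` V" "a \<in> g ` V" "a \<noteq> b"
  shows "\<exists>z\<in>functi_V V - T. functi_E E g (Inr a) z \<noteq> functi_E E g (Inr b) z"
proof -
  obtain u where u: "u \<in> V" "a = g u" using assms by blast
  have "Inl u \<in> functi_V V - T" using u assms(1) unfolding functi_V_def by auto
  moreover have "functi_E E g (Inr a) (Inl u) \<noteq> functi_E E g (Inr b) (Inl u)"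
    using u assms by simp
  ultimately show ?thesis by blast
qed

lemma F_bound:
  assumes sg: "sgraph V E" and con: "gconnected V E" and c3: "3 \<le> card V" and gV: "g ` V \<subseteq> V"
  shows "fix_num (functi_V V) (functi_E E g) \<le> 2 * card V - 3"
proof -
  have fin: "finite V" using sg unfolding sgraph_def by blast
  let ?FV = "functi_V V" and ?FE = "functi_E E g"
  have "\<exists>T. T \<subseteq> ?FV \<and> card T = 3 \<and>
      (\<forall>p\<in>T. \<forall>q\<in>T. p \<noteq> q \<longrightarrow> (\<exists>z\<in>?FV - T. ?FE p z \<noteq> ?FE q z))"
  proof (cases "\<exists>x\<in>V. \<exists>y\<in>V. x \<noteq> y \<and> x \<in> g ` V \<and> y \<in> g ` V")
    case True
    then obtain x y where xy: "x \<in> V" "y \<in> V" "x \<noteq> y" "x \<in> g ` V" "y \<in> g ` V" by blast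
    obtain z where z: "z \<in> V" "z \<noteq> x" "z \<noteq> y" using three_elem[OF fin c3 xy(1,2)] by blast
    let ?T = "{Inr x, Inr y, Inr z} :: ('a + 'a) set"
    have Tsub: "?T \<subseteq> Inr ` V" using xy z by auto
    have H: "\<And>a b. a \<in> g ` V \<Longrightarrow> a \<noteq> b \<Longrightarrow> \<exists>z\<in>?FV - ?T. ?FE (Inr a) z \<noteq> ?FE (Inr b) z"
      by (rule Inr_helper[OF Tsub])
    have H': "\<And>a b. a \<in> g ` V \<Longrightarrow> a \<noteq> b \<Longrightarrow> \<exists>z\<in>?FV - ?T. ?FE (Inr b) z \<noteq> ?FE (Inr a) z"
      using H by metis
    show ?thesis
    proof (intro exI conjI)
      show "?T \<subseteq> ?FV" using xy z unfolding functi_V_def by auto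
      show "card ?T = 3" using xy z by (simp add: card_insert_if)
      show "\<forall>p\<in>?T. \<forall>q\<in>?T. p \<noteq> q \<longrightarrow> (\<exists>z\<in>?FV - ?T. ?FE p z \<noteq> ?FE q z)"
        using H[OF xy(4)] H[OF xy(5)] H'[OF xy(4)] H'[OF xy(5)] xy z by auto
    qed
  next
    case False
    have Vne: "V \<noteq> {}" using sg unfolding sgraph_def by blast
    then obtain a0 where a0: "a0 \<in> V" by blast
    define c where "c = g a0"
    have cV: "c \<in> V" using gV a0 c_def by blast
    have gc: "\<forall>u\<in>V. g u = c" using False gV a0 unfolding c_def by blast
    obtain v where v: "v \<in> V" "v \<noteq> c" using three_elem[OF fin c3 cV cV] by blast
    obtain w where w: "E c w" using exists_nbr[OF con cV v] by blast
    have wV: "w \<in> V" and wc: "w \<noteq> c" using sg w unfolding sgraph_def by blast+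
    obtain y where y: "y \<in> V" "y \<noteq> c" "y \<noteq> w" using three_elem[OF fin c3 cV wV] by blast
    let ?T = "{Inl c, Inr c, Inr y} :: ('a + 'a) set"
    have p1: "\<exists>z\<in>?FV - ?T. ?FE (Inl c) z \<noteq> ?FE (Inr c) z"
    proof
      show "Inr w \<in> ?FV - ?T" using wV wc y unfolding functi_V_def by auto
      show "?FE (Inl c) (Inr w) \<noteq> ?FE (Inr c) (Inr w)" using gc cV wc w by simp
    qed
    have p2: "\<exists>z\<in>?FV - ?T. ?FE (Inl c) z \<noteq> ?FE (Inr y) z"
    proof
      show "Inl w \<in> ?FV - ?T" using wV wc y unfolding functi_V_def by auto
      show "?FE (Inl c) (Inl w) \<noteq> ?FE (Inr y) (Inl w)" using gc wV y w by simp
    qed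
    have p3: "\<exists>z\<in>?FV - ?T. ?FE (Inr c) z \<noteq> ?FE (Inr y) z"
    proof
      show "Inl y \<in> ?FV - ?T" using y unfolding functi_V_def by auto
      show "?FE (Inr c) (Inl y) \<noteq> ?FE (Inr y) (Inl y)" using gc y by simp
    qed
    show ?thesis
    proof (intro exI conjI)
      show "?T \<subseteq> ?FV" using y cV unfolding functi_V_def by auto
      show "card ?T = 3" using y by (simp add: card_insert_if)
      show "\<forall>p\<in>?T. \<forall>q\<in>?T. p \<noteq> q \<longrightarrow> (\<exists>z\<in>?FV - ?T. ?FE p z \<noteq> ?FE q z)"
        using p1 p2 p3 by (auto simp del: functi_E.simps)
    qed
  qed
  then obtain T where T: "T \<subseteq> ?FV" "card T = 3"
      "\<forall>p\<in>T. \<forall>q\<in>T. p \<noteq> q \<longrightarrow> (\<exists>z\<in>?FV - T. ?FE p z \<noteq> ?FE q z)" by blast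
  have "fixing_set ?FV ?FE (?FV - T)" by (rule complement_fixing[OF T(1,3)])
  then have "fix_num ?FV ?FE \<le> card (?FV - T)" by (rule fix_le)
  also have "\<dots> = 2 * card V - 3"
    using T card_Diff_subset[of T ?FV] finite_functi[OF fin] card_functi[OF fin]
    by (metis finite_subset)
  finally show ?thesis .
qed



definition PE :: "nat \<Rightarrow> nat \<Rightarrow> nat \<Rightarrow> bool" where
  "PE n i j \<longleftrightarrow> i < n \<and> j < n \<and> (j = Suc i \<or> i = Suc j)"

definition gg :: "nat \<Rightarrow> nat \<Rightarrow> nat" where
  "gg n i = (if i = n - 1 then 1 else 0)"

lemma not_Q1: "a \<in> V \<Longrightarrow> b \<in> V \<Longrightarrow> a \<noteq> b \<Longrightarrow> E v a \<Longrightarrow> E v b \<Longrightarrow> \<not> Q1 V E v"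
  unfolding Q1_def by metis

lemma FV_cases [consumes 1, case_names L R]: "v \<in> functi_V V \<Longrightarrow> (\<And>i. i \<in> V \<Longrightarrow> v = Inl i \<Longrightarrow> P) \<Longrightarrow> (\<And>i. i \<in> V \<Longrightarrow> v = Inr i \<Longrightarrow> P) \<Longrightarrow> P"
  unfolding functi_V_def by blast

lemma FV_mem[simp]: "Inl i \<in> functi_V V \<longleftrightarrow> i \<in> V" "Inr i \<in> functi_V V \<longleftrightarrow> i \<in> V"
  unfolding functi_V_def by auto

lemma path_F_rigid:
  assumes n3: "3 \<le> n" and a: "automorphism (functi_V {..<n}) (functi_E (PE n) (gg n)) \<sigma>"
  shows "\<forall>v\<in>functi_V {..<n}. \<sigma> v = v"
proof -
  let ?FV = "functi_V {..<n}" and ?FE = "functi_E (PE n) (gg n)"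
  have g01: "gg n u \<le> 1" for u unfolding gg_def by auto
  have gn1: "gg n u = 1 \<longleftrightarrow> u = n - 1" for u unfolding gg_def by auto
  have B0: "\<sigma> (Inr (n - 1)) = Inr (n - 1)"
  proof (rule fixed_unique[OF a Q1_pres[OF a]])
    show "Inr (n - 1) \<in> ?FV" using n3 by simp
    show "Q1 ?FV ?FE (Inr (n - 1))" unfolding Q1_def
    proof (intro bexI ballI)
      show "Inr (n - 2) \<in> ?FV" using n3 by simp
      fix u' assume "u' \<in> ?FV"
      then show "?FE (Inr (n - 1)) u' \<longleftrightarrow> u' = Inr (n - 2)"
      proof (cases rule: FV_cases)
        case (L i) then show ?thesis using g01[of i] n3 by auto
      next
        case (R i) then show ?thesis using n3 by (auto simp: PE_def)
      qed
    qed
    show "\<forall>v\<in>?FV. Q1 ?FV ?FE v \<longrightarrow> v = Inr (n - 1)"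
    proof (intro ballI impI)
      fix v assume v: "v \<in> ?FV" and q: "Q1 ?FV ?FE v"
      show "v = Inr (n - 1)"
      proof (rule ccontr)
        assume nv: "v \<noteq> Inr (n - 1)"
        from v show False
        proof (cases rule: FV_cases)
          case (L i)
          have "gg n i < n" using g01[of i] n3 by linarith
          then show False
          proof (cases "i = 0")
            case True
            have "\<not> Q1 ?FV ?FE v" by (rule not_Q1[of "Inr (gg n i)" _ "Inl 1"]) (use L True n3 \<open>gg n i < n\<close> in \<open>auto simp: PE_def\<close>)
            then show False using q by simp
          next
            case False
            have "\<not> Q1 ?FV ?FE v" by (rule not_Q1[of "Inr (gg n i)" _ "Inl (i - 1)"]) (use L False n3 \<open>gg n i < n\<close> in \<open>auto simp: PE_def\<close>)
            then show False using q by simp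
          qed
        next
          case (R i)
          show False
          proof (cases "i = 0")
            case True
            have "gg n 0 = 0" using n3 unfolding gg_def by auto
            then have "\<not> Q1 ?FV ?FE v" by (intro not_Q1[of "Inr 1" _ "Inl 0"]) (use R True n3 in \<open>auto simp: PE_def\<close>)
            then show False using q by simp
          next
            case False
            then have "i < n - 1" using R nv by auto
            then have "\<not> Q1 ?FV ?FE v" by (intro not_Q1[of "Inr (i - 1)" _ "Inr (i + 1)"]) (use R False n3 in \<open>auto simp: PE_def\<close>)
            then show False using q by simp
          qed
        qed
      qed
    qed
  qed
  have B: "\<forall>j. 1 \<le> j \<longrightarrow> j < n \<longrightarrow> \<sigma> (Inr j) = Inr j"
  proof -
    have "1 \<le> n - 1" using n3 by simp
    then have "\<forall>j. 1 \<le> j \<longrightarrow> j < n \<longrightarrow> \<sigma> (Inr j) = Inr j"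
    proof (induction rule: inc_induct)
      case base
      then show ?case using B0 by (metis Suc_pred' le0 le_antisym le_simps(3) not_le_imp_less not_less_eq_eq)
    next
      case (step m)
      have "\<sigma> (Inr m) = Inr m"
      proof (rule fixed_nbr[OF a, of "Inr (Suc m)" _ "\<lambda>_. True"])
        show "Inr (Suc m) \<in> ?FV" "Inr m \<in> ?FV" using step by auto
        show "\<sigma> (Inr (Suc m)) = Inr (Suc m)" using step by auto
        show "?FE (Inr (Suc m)) (Inr m)" using step by (auto simp: PE_def)
        show "\<forall>v\<in>?FV. True \<longrightarrow> True" by simp
        show "\<forall>v\<in>?FV. ?FE (Inr (Suc m)) v \<longrightarrow> True \<longrightarrow> v \<noteq> Inr m \<longrightarrow> \<sigma> v = v"
        proof (intro ballI impI)
          fix v assume v: "v \<in> ?FV" and e: "?FE (Inr (Suc m)) v" and ne: "v \<noteq> Inr m"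
          from v show "\<sigma> v = v"
          proof (cases rule: FV_cases)
            case (L i) then show ?thesis using e g01[of i] step by auto
          next
            case (R i) then show ?thesis using e ne step by (auto simp: PE_def)
          qed
        qed
      qed simp
      then show ?case using step by (metis le_antisym not_less_eq_eq)
    qed
    then show ?thesis .
  qed
  have nbrL: "?FE (Inl (n - 1)) z \<Longrightarrow> z = Inl (n - 2) \<or> z = Inr 1" for z
    using n3 by (cases z) (auto simp: PE_def gg_def)
  have R0: "\<sigma> (Inr 0) = Inr 0"
  proof (rule fixed_nbr[OF a, of "Inr 1" _ "Q3 ?FV ?FE"])
    show "Inr 1 \<in> ?FV" "Inr 0 \<in> ?FV" using n3 by auto
    show "\<sigma> (Inr 1) = Inr 1" using B n3 by auto
    show "?FE (Inr 1) (Inr 0)" using n3 by (auto simp: PE_def)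
    show "\<forall>v\<in>?FV. Q3 ?FV ?FE v \<longrightarrow> Q3 ?FV ?FE (\<sigma> v)" by (rule Q3_pres[OF a])
    show "Q3 ?FV ?FE (Inr 0)" unfolding Q3_def
      by (rule bexI[of _ "Inr 1"], rule bexI[of _ "Inl 0"], rule bexI[of _ "Inl 1"])
         (use n3 in \<open>auto simp: PE_def gg_def\<close>)
    show "\<forall>v\<in>?FV. ?FE (Inr 1) v \<longrightarrow> Q3 ?FV ?FE v \<longrightarrow> v \<noteq> Inr 0 \<longrightarrow> \<sigma> v = v"
    proof (intro ballI impI)
      fix v assume v: "v \<in> ?FV" and e: "?FE (Inr 1) v" and q: "Q3 ?FV ?FE v" and ne: "v \<noteq> Inr 0"
      from v show "\<sigma> v = v"
      proof (cases rule: FV_cases)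
        case (L i)
        then have i: "i = n - 1" using e gn1 by auto
        from q obtain x y z where "?FE v x" "?FE v y" "?FE v z" "x \<noteq> y" "x \<noteq> z" "y \<noteq> z"
          unfolding Q3_def by blast
        then have False using nbrL L i by metis
        then show ?thesis ..
      next
        case (R i) then show ?thesis using ne B by auto
      qed
    qed
  qed
  have RR: "\<forall>j<n. \<sigma> (Inr j) = Inr j" using B R0 by (metis less_one not_le)
  have A: "\<forall>j. 0 \<le> j \<longrightarrow> j < n \<longrightarrow> \<sigma> (Inl j) = Inl j"
  proof -
    have "0 \<le> n - 1" by simp
    then show ?thesis
    proof (induction rule: inc_induct)
      case base
      have "\<sigma> (Inl (n - 1)) = Inl (n - 1)"
      proof (rule fixed_nbr[OF a, of "Inr 1" _ "\<lambda>_. True"])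
        show "Inr 1 \<in> ?FV" "Inl (n - 1) \<in> ?FV" using n3 by auto
        show "\<sigma> (Inr 1) = Inr 1" using RR n3 by auto
        show "?FE (Inr 1) (Inl (n - 1))" using n3 by (auto simp: gg_def)
        show "\<forall>v\<in>?FV. True \<longrightarrow> True" by simp
        show "\<forall>v\<in>?FV. ?FE (Inr 1) v \<longrightarrow> True \<longrightarrow> v \<noteq> Inl (n - 1) \<longrightarrow> \<sigma> v = v"
        proof (intro ballI impI)
          fix v assume v: "v \<in> ?FV" and e: "?FE (Inr 1) v" and ne: "v \<noteq> Inl (n - 1)"
          from v show "\<sigma> v = v"
          proof (cases rule: FV_cases)
            case (L i) then show ?thesis using e ne gn1 by auto
          next
            case (R i) then show ?thesis using RR by auto
          qed
        qed
      qed simp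
      then show ?case using n3 by (metis Suc_pred' le_antisym not_less_eq_eq gr_zeroI zero_less_diff not_le)
    next
      case (step m)
      have "\<sigma> (Inl m) = Inl m"
      proof (rule fixed_nbr[OF a, of "Inl (Suc m)" _ "\<lambda>_. True"])
        show "Inl (Suc m) \<in> ?FV" "Inl m \<in> ?FV" using step by auto
        show "\<sigma> (Inl (Suc m)) = Inl (Suc m)" using step by auto
        show "?FE (Inl (Suc m)) (Inl m)" using step by (auto simp: PE_def)
        show "\<forall>v\<in>?FV. True \<longrightarrow> True" by simp
        show "\<forall>v\<in>?FV. ?FE (Inl (Suc m)) v \<longrightarrow> True \<longrightarrow> v \<noteq> Inl m \<longrightarrow> \<sigma> v = v"
        proof (intro ballI impI)
          fix v assume v: "v \<in> ?FV" and e: "?FE (Inl (Suc m)) v" and ne: "v \<noteq> Inl m"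
          from v show "\<sigma> v = v"
          proof (cases rule: FV_cases)
            case (L i) then show ?thesis using e ne step by (auto simp: PE_def)
          next
            case (R i) then show ?thesis using RR by auto
          qed
        qed
      qed simp
      then show ?case using step by (metis le_antisym not_less_eq_eq)
    qed
  qed
  show ?thesis
  proof
    fix v assume "v \<in> ?FV"
    then show "\<sigma> v = v" by (cases rule: FV_cases) (use A RR in auto)
  qed
qed



lemma fix_ge1:
  assumes "finite V" "\<not> fixing_set V E {}"
  shows "1 \<le> fix_num V E"
proof -
  obtain S where S: "fixing_set V E S" "card S = fix_num V E" using fix_attained by blast
  have "finite S" using S(1) assms(1) unfolding fixing_set_def by (meson finite_subset)
  then show ?thesis using S assms(2) by (metis card_0_eq less_one not_le)
qed

lemma path_sgraph: "1 \<le> n \<Longrightarrow> sgraph {..<n} (PE n)"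
  unfolding sgraph_def PE_def by (auto simp: lessThan_empty_iff)

lemma path_conn: "gconnected {..<n} (PE n)"
proof -
  let ?R = "{(x, y). PE n x y}"
  have a: "k < n \<longrightarrow> (0, k) \<in> ?R\<^sup>* \<and> (k, 0) \<in> ?R\<^sup>*" for k
  proof (induction k)
    case 0 then show ?case by simp
  next
    case (Suc k)
    show ?case
    proof
      assume k: "Suc k < n"
      then have h: "(0, k) \<in> ?R\<^sup>*" "(k, 0) \<in> ?R\<^sup>*" using Suc by auto
      have e1: "(k, Suc k) \<in> ?R" and e2: "(Suc k, k) \<in> ?R" using k by (auto simp: PE_def)
      show "(0, Suc k) \<in> ?R\<^sup>* \<and> (Suc k, 0) \<in> ?R\<^sup>*"
        using rtrancl_into_rtrancl[OF h(1) e1] converse_rtrancl_into_rtrancl[OF e2 h(2)] by blast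
    qed
  qed
  show ?thesis unfolding gconnected_def
  proof (intro ballI)
    fix u v assume "u \<in> {..<n}" "v \<in> {..<n}"
    then show "(u, v) \<in> ?R\<^sup>*" using a[of u] a[of v] by (meson lessThan_iff rtrancl_trans)
  qed
qed

lemma path_fixing0: "fixing_set {..<n} (PE n) {0}" if "1 \<le> n"
  unfolding fixing_set_def
proof (intro conjI allI impI ballI)
  show "{0} \<subseteq> {..<n}" using that by auto
  fix \<sigma> x assume h: "automorphism {..<n} (PE n) \<sigma> \<and> (\<forall>x\<in>{0}. \<sigma> x = x)" and x: "x \<in> {..<n}"
  have a: "automorphism {..<n} (PE n) \<sigma>" and s0: "\<sigma> 0 = 0" using h by auto
  have "k < n \<longrightarrow> (\<forall>j\<le>k. \<sigma> j = j)" for k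
  proof (induction k)
    case 0 then show ?case using s0 by simp
  next
    case (Suc k)
    show ?case
    proof
      assume k: "Suc k < n"
      then have IH: "\<forall>j\<le>k. \<sigma> j = j" using Suc by auto
      have "\<sigma> (Suc k) = Suc k"
      proof (rule fixed_nbr[OF a, of k _ "\<lambda>_. True"])
        show "k \<in> {..<n}" "Suc k \<in> {..<n}" using k by auto
        show "\<sigma> k = k" using IH by auto
        show "PE n k (Suc k)" using k by (auto simp: PE_def)
        show "\<forall>v\<in>{..<n}. True \<longrightarrow> True" by simp
        show "\<forall>v\<in>{..<n}. PE n k v \<longrightarrow> True \<longrightarrow> v \<noteq> Suc k \<longrightarrow> \<sigma> v = v"
          using IH by (auto simp: PE_def)
      qed simp
      then show "\<forall>j\<le>Suc k. \<sigma> j = j" using IH le_Suc_eq by auto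
    qed
  qed
  then show "\<sigma> x = x" using x by auto
qed

lemma path_not_fixing_empty: "\<not> fixing_set {..<n} (PE n) {}" if "2 \<le> n"
proof
  assume f: "fixing_set {..<n} (PE n) {}"
  let ?r = "\<lambda>i. n - 1 - i"
  have "automorphism {..<n} (PE n) ?r"
    unfolding automorphism_def
  proof
    show "bij_betw ?r {..<n} {..<n}"
      by (rule bij_betw_byWitness[where f'="?r"]) auto
    show "\<forall>u\<in>{..<n}. \<forall>v\<in>{..<n}. PE n u v = PE n (?r u) (?r v)"
      unfolding PE_def by auto
  qed
  moreover have "0 \<in> {..<n}" using that by simp
  ultimately have "?r 0 = 0" using f unfolding fixing_set_def by blast
  then show False using that by simp
qed

lemma path_fix1: "2 \<le> n \<Longrightarrow> fix_num {..<n} (PE n) = 1"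
  using fix_ge1[of "{..<n}" "PE n"] path_not_fixing_empty[of n] fix_le[OF path_fixing0[of n]]
  by simp

lemma path_F_fix0: "3 \<le> n \<Longrightarrow> fix_num (functi_V {..<n}) (functi_E (PE n) (gg n)) = 0"
proof -
  assume n: "3 \<le> n"
  have "fixing_set (functi_V {..<n}) (functi_E (PE n) (gg n)) {}"
    unfolding fixing_set_def using path_F_rigid[OF n] by blast
  then show ?thesis using fix_le by fastforce
qed

definition KE :: "nat \<Rightarrow> nat \<Rightarrow> nat \<Rightarrow> bool" where
  "KE n i j \<longleftrightarrow> i < n \<and> j < n \<and> i \<noteq> j"

lemma K_sgraph: "1 \<le> n \<Longrightarrow> sgraph {..<n} (KE n)"
  unfolding sgraph_def KE_def by (auto simp: lessThan_empty_iff)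

lemma K_conn: "gconnected {..<n} (KE n)"
  unfolding gconnected_def KE_def
  by (metis (mono_tags, lifting) case_prodI lessThan_iff mem_Collect_eq r_into_rtrancl rtrancl.rtrancl_refl)

lemma K_fix: "3 \<le> n \<Longrightarrow> fix_num {..<n} (KE n) = n - 1"
proof -
  assume n: "3 \<le> n"
  obtain S where S: "fixing_set {..<n} (KE n) S" "card S = fix_num {..<n} (KE n)" using fix_attained by blast
  have "card {..<n} \<le> card ({..<n} \<inter> S) + 1"
    by (rule twin_card[OF _ _ _ _ _ S(1)]) (auto simp: KE_def)
  moreover have "{..<n} \<inter> S = S" using S(1) unfolding fixing_set_def by auto
  ultimately have "n - 1 \<le> fix_num {..<n} (KE n)" using S by simp
  moreover have "fix_num {..<n} (KE n) \<le> n - 1" using fix_G_le[of "{..<n}" 0] n by simp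
  ultimately show ?thesis by simp
qed

lemma KF_fix: "3 \<le> n \<Longrightarrow> fix_num (functi_V {..<n}) (functi_E (KE n) (\<lambda>_. 0)) = 2 * n - 3"
proof -
  assume n: "3 \<le> n"
  let ?FV = "functi_V {..<n}" and ?FE = "functi_E (KE n) (\<lambda>_. 0)"
  obtain S where S: "fixing_set ?FV ?FE S" "card S = fix_num ?FV ?FE" using fix_attained by blast
  have SV: "S \<subseteq> ?FV" using S(1) unfolding fixing_set_def by auto
  have finS: "finite S" using SV finite_functi[of "{..<n}"] finite_subset by blast
  have sym: "\<forall>u v. ?FE u v \<longrightarrow> ?FE v u"
  proof (intro allI impI)
    fix u v assume "?FE u v" then show "?FE v u" by (cases u; cases v) (auto simp: KE_def)
  qed
  have irr: "\<forall>u. \<not> ?FE u u"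
  proof
    fix u show "\<not> ?FE u u" by (cases u) (auto simp: KE_def)
  qed
  let ?X1 = "Inl ` {..<n} :: (nat + nat) set" and ?X2 = "Inr ` {1..<n} :: (nat + nat) set"
  have c1: "card ?X1 \<le> card (?X1 \<inter> S) + 1"
  proof (rule twin_card[OF _ _ sym irr _ S(1)])
    show "\<forall>a\<in>?X1. \<forall>b\<in>?X1. a \<noteq> b \<longrightarrow> (\<forall>z\<in>?FV. z \<noteq> a \<longrightarrow> z \<noteq> b \<longrightarrow> ?FE a z = ?FE b z)"
    proof (intro ballI impI)
      fix a b z assume "a \<in> ?X1" "b \<in> ?X1" "a \<noteq> b" "z \<in> ?FV" "z \<noteq> a" "z \<noteq> b"
      then show "?FE a z = ?FE b z" by (cases z) (auto simp: KE_def)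
    qed
  qed (auto simp: functi_V_def)
  have c2: "card ?X2 \<le> card (?X2 \<inter> S) + 1"
  proof (rule twin_card[OF _ _ sym irr _ S(1)])
    show "\<forall>a\<in>?X2. \<forall>b\<in>?X2. a \<noteq> b \<longrightarrow> (\<forall>z\<in>?FV. z \<noteq> a \<longrightarrow> z \<noteq> b \<longrightarrow> ?FE a z = ?FE b z)"
    proof (intro ballI impI)
      fix a b z assume "a \<in> ?X2" "b \<in> ?X2" "a \<noteq> b" "z \<in> ?FV" "z \<noteq> a" "z \<noteq> b"
      then show "?FE a z = ?FE b z" by (cases z) (auto simp: KE_def)
    qed
  qed (auto simp: functi_V_def)
  have cX1: "card ?X1 = n" by (simp add: card_image)
  have cX2: "card ?X2 = n - 1" by (simp add: card_image)
  have "card (?X1 \<inter> S) + card (?X2 \<inter> S) = card ((?X1 \<inter> S) \<union> (?X2 \<inter> S))"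
    by (rule card_Un_disjoint[symmetric]) (use finS in auto)
  also have "\<dots> \<le> card S" by (rule card_mono[OF finS]) auto
  finally have "2 * n - 3 \<le> fix_num ?FV ?FE" using c1 c2 cX1 cX2 S(2) n by linarith
  moreover have "fix_num ?FV ?FE \<le> 2 * card {..<n} - 3"
    by (rule F_bound) (use n K_sgraph[of n] K_conn[of n] in auto)
  ultimately show ?thesis by simp
qed


theorem mainTheorem2:
  shows "(\<forall>(V :: 'a set) E g.
            sgraph V E \<and> gconnected V E \<and> symmetric_graph V E \<and> card V \<ge> 3 \<and> g ` V \<subseteq> V
            \<longrightarrow> 1 \<le> fix_num V E + fix_num (functi_V V) (functi_E E g) \<and>
                fix_num V E + fix_num (functi_V V) (functi_E E g) \<le> 3 * card V - 4)
       \<and> (\<forall>n \<ge> 3.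
            (\<exists>(V :: nat set) E g. sgraph V E \<and> gconnected V E \<and> symmetric_graph V E \<and>
               card V = n \<and> g ` V \<subseteq> V \<and>
               fix_num V E + fix_num (functi_V V) (functi_E E g) = 1) \<and>
            (\<exists>(V :: nat set) E g. sgraph V E \<and> gconnected V E \<and> symmetric_graph V E \<and>
               card V = n \<and> g ` V \<subseteq> V \<and>
               fix_num V E + fix_num (functi_V V) (functi_E E g) = 3 * n - 4))"
proof (intro conjI allI impI)
  fix V :: "'a set" and E g
  assume h: "sgraph V E \<and> gconnected V E \<and> symmetric_graph V E \<and> card V \<ge> 3 \<and> g ` V \<subseteq> V"
  have fin: "finite V" and ne: "V \<noteq> {}" using h unfolding sgraph_def by auto
  then obtain x where x: "x \<in> V" by blast
  have f1: "fix_num V E \<noteq> 0" using h unfolding symmetric_graph_def by blast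
  have f2: "fix_num V E \<le> card V - 1" by (rule fix_G_le[OF fin x])
  have f3: "fix_num (functi_V V) (functi_E E g) \<le> 2 * card V - 3" by (rule F_bound) (use h in auto)
  show "1 \<le> fix_num V E + fix_num (functi_V V) (functi_E E g)" using f1 by linarith
  show "fix_num V E + fix_num (functi_V V) (functi_E E g) \<le> 3 * card V - 4"
    using f2 f3 h by linarith
next
  fix n :: nat assume n: "3 \<le> n"
  show "\<exists>(V :: nat set) E g. sgraph V E \<and> gconnected V E \<and> symmetric_graph V E \<and>
               card V = n \<and> g ` V \<subseteq> V \<and>
               fix_num V E + fix_num (functi_V V) (functi_E E g) = 1"
  proof (intro exI conjI)
    show "sgraph {..<n} (PE n)" using n by (intro path_sgraph) simp
    show "gconnected {..<n} (PE n)" by (rule path_conn)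
    show "symmetric_graph {..<n} (PE n)" unfolding symmetric_graph_def using path_fix1[of n] n by simp
    show "card {..<n} = n" by simp
    show "gg n ` {..<n} \<subseteq> {..<n}" using n by (auto simp: gg_def)
    show "fix_num {..<n} (PE n) + fix_num (functi_V {..<n}) (functi_E (PE n) (gg n)) = 1"
      using path_fix1[of n] path_F_fix0[OF n] n by simp
  qed
  show "\<exists>(V :: nat set) E g. sgraph V E \<and> gconnected V E \<and> symmetric_graph V E \<and>
               card V = n \<and> g ` V \<subseteq> V \<and>
               fix_num V E + fix_num (functi_V V) (functi_E E g) = 3 * n - 4"
  proof (intro exI conjI)
    show "sgraph {..<n} (KE n)" using n by (intro K_sgraph) simp
    show "gconnected {..<n} (KE n)" by (rule K_conn)
    show "symmetric_graph {..<n} (KE n)" unfolding symmetric_graph_def using K_fix[OF n] n by simp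
    show "card {..<n} = n" by simp
    show "(\<lambda>_. 0) ` {..<n} \<subseteq> {..<n}" using n by auto
    show "fix_num {..<n} (KE n) + fix_num (functi_V {..<n}) (functi_E (KE n) (\<lambda>_. 0)) = 3 * n - 4"
      using K_fix[OF n] KF_fix[OF n] n by simp
  qed
qed

end
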